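(* Let $r\ge 1$ be an integer, let $A$ be a finite alphabet, and let $f_0,\ldots,f_{r-1}$ be morphisms of $A^*$. If an infinite word $\mathbf{w}$ over $A$ is an alternating fixed point of $(f_0,\ldots,f_{r-1})$, then $\mathbf{w}$ is a fixed point of some $r$-block substitution $g:A^r\to A^*$.
   Context: An infinite word $\mathbf{w}=w_0w_1w_2\cdots$ over $A$ is an alternating fixed point of $(f_0,\ldots,f_{r-1})$ if $\mathbf{w}=f_0(w_0)f_1(w_1)\cdots f_{r-1}(w_{r-1})f_0(w_r)\cdots f_{i\bmod r}(w_i)\cdots$. An $r$-block substitution is a map $g:A^r\to A^*$; it acts on a word $w_0\cdots w_{rn-1}$ by $g(w_0\cdots w_{r-1})g(w_r\cdots w_{2r-1})\cdots g(w_{r(n-1)}\cdots w_{rn-1})$ (a suffix of length less than $r$ is ignored). An infinite word $\mathbf{w}=w_0w_1\cdots$ is a fixed point of $g$ if $\mathbf{w}=g(w_0\cdots w_{r-1})g(w_r\cdots w_{2r-1})\cdots$. *)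

theory Defs
  imports Main
begin

text \<open>The infinite word w equals the infinite concatenation u 0 u 1 u 2 ... of the
  finite words u i: every finite concatenation u 0 ... u (n-1) is a prefix of w,
  and these prefixes have unbounded length (so the concatenation is infinite).\<close>
definition inf_concat_eq :: "(nat \<Rightarrow> 'a) \<Rightarrow> (nat \<Rightarrow> 'a list) \<Rightarrow> bool" where
  "inf_concat_eq w u \<longleftrightarrow>
     (\<forall>n. \<forall>i < length (concat (map u [0..<n])). w i = concat (map u [0..<n]) ! i) \<and>
     (\<forall>m. \<exists>n. m \<le> length (concat (map u [0..<n])))"

text \<open>Alternating fixed point of (f 0, ..., f (r-1)); a morphism of A* is given by
  its images of letters.\<close>
definition alternating_fixed_point :: "nat \<Rightarrow> (nat \<Rightarrow> 'a \<Rightarrow> 'a list) \<Rightarrow> (nat \<Rightarrow> 'a) \<Rightarrow> bool" where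
  "alternating_fixed_point r f w \<longleftrightarrow> inf_concat_eq w (\<lambda>i. f (i mod r) (w i))"

definition block_fixed_point :: "nat \<Rightarrow> ('a list \<Rightarrow> 'a list) \<Rightarrow> (nat \<Rightarrow> 'a) \<Rightarrow> bool" where
  "block_fixed_point r g w \<longleftrightarrow> inf_concat_eq w (\<lambda>i. g (map w [r * i..<r * i + r]))"

end

theory Submission
  imports Defs
begin

lemma block_eq:
  assumes "r \<ge> 1"
  shows "concat (map (\<lambda>i. (\<lambda>xs. concat (map (\<lambda>j. f j (xs ! j)) [0..<r])) (map w [r * i..<r * i + r])) [0..<n])
       = concat (map (\<lambda>i. f (i mod r) (w i)) [0..<r * n])"
proof (induction n)
  case 0 then show ?case by simp
next
  case (Suc n)
  have up: "[0..<r + r * n] = [0..<r*n] @ [r*n..<r*n+r]"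
    using upt_add_eq_append[of 0 "r*n" r] by (simp add: algebra_simps)
  have sh: "[r*n..<r*n+r] = map (\<lambda>j. j + r*n) [0..<r]"
    by (simp add: map_add_upt add.commute)
  have "concat (map (\<lambda>i. f (i mod r) (w i)) [r*n..<r*n+r])
      = concat (map (\<lambda>j. f j (map w [r * n..<r * n + r] ! j)) [0..<r])"
    unfolding sh by (simp add: comp_def, intro arg_cong[where f=concat] map_cong) auto
  then show ?case using Suc by (simp only: upt_Suc_append[OF le0] map_append concat_append list.map concat.simps append_Nil2 mult_Suc_right up)
qed

theorem mainTheorem1:
  fixes r :: nat and A :: "'a set" and f :: "nat \<Rightarrow> 'a \<Rightarrow> 'a list" and w :: "nat \<Rightarrow> 'a"
  assumes "r \<ge> 1"
    and "finite A"
    and "\<And>k a. k < r \<Longrightarrow> a \<in> A \<Longrightarrow> set (f k a) \<subseteq> A"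
    and "\<And>i. w i \<in> A"
    and "alternating_fixed_point r f w"
  shows "\<exists>g :: 'a list \<Rightarrow> 'a list.
           (\<forall>xs. set xs \<subseteq> A \<and> length xs = r \<longrightarrow> set (g xs) \<subseteq> A) \<and>
           block_fixed_point r g w"
proof (intro exI conjI allI impI)
  let ?g = "\<lambda>xs. concat (map (\<lambda>j. f j (xs ! j)) [0..<r])"
  fix xs :: "'a list" assume h: "set xs \<subseteq> A \<and> length xs = r"
  show "set (?g xs) \<subseteq> A"
  proof
    fix x assume "x \<in> set (?g xs)"
    then obtain j where "j < r" "x \<in> set (f j (xs ! j))" by auto
    moreover have "xs ! j \<in> A" using h \<open>j < r\<close> by auto
    ultimately show "x \<in> A" using assms(3) by blast
  qed
next
  let ?g = "\<lambda>xs. concat (map (\<lambda>j. f j (xs ! j)) [0..<r])"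
  let ?u = "\<lambda>i. f (i mod r) (w i)"
  have A1: "\<forall>n. \<forall>i < length (concat (map ?u [0..<n])). w i = concat (map ?u [0..<n]) ! i"
   and A2: "\<forall>m. \<exists>n. m \<le> length (concat (map ?u [0..<n]))"
    using assms(5) unfolding alternating_fixed_point_def inf_concat_eq_def by auto
  have mono: "length (concat (map ?u [0..<n])) \<le> length (concat (map ?u [0..<n + k]))" for n k
    using upt_add_eq_append[of 0 n k] by simp
  show "block_fixed_point r ?g w"
    unfolding block_fixed_point_def inf_concat_eq_def block_eq[OF assms(1)]
  proof (intro conjI)
    show "\<forall>n. \<forall>i < length (concat (map ?u [0..<r * n])). w i = concat (map ?u [0..<r * n]) ! i"
      using A1 by blast
  next
    show "\<forall>m. \<exists>n. m \<le> length (concat (map ?u [0..<r * n]))"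
    proof
    fix m
    obtain n where "m \<le> length (concat (map ?u [0..<n]))" using A2 by blast
    moreover have "n \<le> r * n" using assms(1) by simp
    then obtain k where "r * n = n + k" using le_Suc_ex by blast
    have "length (concat (map ?u [0..<n])) \<le> length (concat (map ?u [0..<r * n]))"
      using mono[of n k] \<open>r * n = n + k\<close> by (simp only:)
    ultimately have "m \<le> length (concat (map ?u [0..<r * n]))" by (rule order.trans)
    then show "\<exists>n. m \<le> length (concat (map ?u [0..<r * n]))" by blast
    qed
  qed
qed

end
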